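(* Let $M\in\mathbb R^{\mathbb N\times\mathbb N}$ belong to the Jaffard class $\mathcal J(d,\gamma,C)$ and be elliptic, i.e., there is $C_{\rm ell}>0$ with $Mx\cdot x\ge C_{\rm ell}\|x\|_{\ell_2}^2$ for all $x\in\ell_2$. Then $M$ has an $LU$-factorization $M=LU$ with $L$ lower triangular ($L_{ij}=0$ for $i<j$) and $U$ upper triangular ($U_{ij}=0$ for $i>j$) such that the entrywise moduli $|L|,|U|,|L^{-1}|,|U^{-1}|:\ell_2\to\ell_2$ are bounded operators.
   Context: Jaffard class: for a metric $d:\mathbb N\times\mathbb N\to[0,\infty)$ with $\sup_{i\in\mathbb N}\sum_{j\in\mathbb N}\exp(-\varepsilon d(i,j))<\infty$ for every $\varepsilon>0$, and $\gamma>0$, a matrix $M$ belongs to $\mathcal J(d,\gamma,C)$ if for every $0<\gamma'<\gamma$ there exists $C(\gamma')>0$ with $|M_{ij}|\le C(\gamma')\exp(-\gamma' d(i,j))$ for all $i,j$. *)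

theory Defs
  imports "HOL-Analysis.Analysis"
begin

type_synonym imat = "nat \<Rightarrow> nat \<Rightarrow> real"

definition is_metric_nat :: "(nat \<Rightarrow> nat \<Rightarrow> real) \<Rightarrow> bool" where
  "is_metric_nat d \<longleftrightarrow>
     (\<forall>i j. 0 \<le> d i j) \<and> (\<forall>i j. d i j = 0 \<longleftrightarrow> i = j) \<and>
     (\<forall>i j. d i j = d j i) \<and> (\<forall>i j k. d i k \<le> d i j + d j k)"

definition metric_summable :: "(nat \<Rightarrow> nat \<Rightarrow> real) \<Rightarrow> bool" where
  "metric_summable d \<longleftrightarrow>
     (\<forall>\<epsilon>>0. (\<forall>i. (\<lambda>j. exp (- \<epsilon> * d i j)) summable_on UNIV) \<and>
            bdd_above (range (\<lambda>i. \<Sum>\<^sub>\<infinity>j. exp (- \<epsilon> * d i j))))"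

definition jaffard :: "(nat \<Rightarrow> nat \<Rightarrow> real) \<Rightarrow> real \<Rightarrow> imat \<Rightarrow> bool" where
  "jaffard d \<gamma> M \<longleftrightarrow>
     (\<forall>\<gamma>'. 0 < \<gamma>' \<and> \<gamma>' < \<gamma> \<longrightarrow>
        (\<exists>C>0. \<forall>i j. \<bar>M i j\<bar> \<le> C * exp (- \<gamma>' * d i j)))"

definition ell2 :: "(nat \<Rightarrow> real) \<Rightarrow> bool" where
  "ell2 x \<longleftrightarrow> (\<lambda>i. (x i)\<^sup>2) summable_on UNIV"

definition ell2_normsq :: "(nat \<Rightarrow> real) \<Rightarrow> real" where
  "ell2_normsq x = (\<Sum>\<^sub>\<infinity>i. (x i)\<^sup>2)"

definition mat_vec :: "imat \<Rightarrow> (nat \<Rightarrow> real) \<Rightarrow> nat \<Rightarrow> real" where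
  "mat_vec A x = (\<lambda>i. \<Sum>\<^sub>\<infinity>j. A i j * x j)"

definition mat_mult :: "imat \<Rightarrow> imat \<Rightarrow> imat" where
  "mat_mult A B = (\<lambda>i j. \<Sum>\<^sub>\<infinity>k. A i k * B k j)"

definition id_mat :: imat where
  "id_mat = (\<lambda>i j. if i = j then 1 else 0)"

definition abs_mat :: "imat \<Rightarrow> imat" where
  "abs_mat A = (\<lambda>i j. \<bar>A i j\<bar>)"

definition elliptic :: "imat \<Rightarrow> real \<Rightarrow> bool" where
  "elliptic M c \<longleftrightarrow>
     (\<forall>x. ell2 x \<longrightarrow> (\<Sum>\<^sub>\<infinity>i. mat_vec M x i * x i) \<ge> c * ell2_normsq x)"

definition lower_tri :: "imat \<Rightarrow> bool" where
  "lower_tri L \<longleftrightarrow> (\<forall>i j. i < j \<longrightarrow> L i j = 0)"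

definition upper_tri :: "imat \<Rightarrow> bool" where
  "upper_tri U \<longleftrightarrow> (\<forall>i j. i > j \<longrightarrow> U i j = 0)"

definition bounded_l2 :: "imat \<Rightarrow> bool" where
  "bounded_l2 A \<longleftrightarrow>
     (\<exists>K\<ge>0. \<forall>x. ell2 x \<longrightarrow>
        (\<forall>i. (\<lambda>j. A i j * x j) summable_on UNIV) \<and>
        ell2 (mat_vec A x) \<and>
        ell2_normsq (mat_vec A x) \<le> K * ell2_normsq x)"

end

theory Submission
  imports Defs
begin


lemma infsum_fin_supp:
  fixes f :: "nat \<Rightarrow> real"
  assumes "finite S" "\<And>j. j \<notin> S \<Longrightarrow> f j = 0"
  shows "infsum f UNIV = sum f S"
proof -
  have "infsum f UNIV = infsum f S"
    by (rule infsum_cong_neutral) (use assms in auto)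
  then show ?thesis using assms(1) by simp
qed

lemma mm_lower: "lower_tri A \<Longrightarrow> mat_mult A B i j = (\<Sum>m\<le>i. A i m * B m j)"
  unfolding mat_mult_def lower_tri_def
  by (rule infsum_fin_supp) auto

lemma mm_upper: "upper_tri B \<Longrightarrow> mat_mult A B i j = (\<Sum>m\<le>j. A i m * B m j)"
  unfolding mat_mult_def upper_tri_def
  by (rule infsum_fin_supp) auto

lemma lower_mult: "lower_tri A \<Longrightarrow> lower_tri B \<Longrightarrow> lower_tri (mat_mult A B)"
  unfolding lower_tri_def
proof (intro allI impI)
  fix i j :: nat assume A: "\<forall>i j. i < j \<longrightarrow> A i j = 0" and B: "\<forall>i j. i < j \<longrightarrow> B i j = 0" and ij: "i < j"
  have "mat_mult A B i j = (\<Sum>m\<le>i. A i m * B m j)" using A by (simp add: mm_lower lower_tri_def)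
  also have "\<dots> = 0" using B ij by (intro sum.neutral) auto
  finally show "mat_mult A B i j = 0" .
qed

lemma mm_id_right: "mat_mult A id_mat = A"
proof (intro ext)
  fix i j
  show "mat_mult A id_mat i j = A i j"
    unfolding mat_mult_def id_mat_def
    by (subst infsum_fin_supp[of "{j}"]) auto
qed

lemma mm_id_left: "mat_mult id_mat A = A"
proof (intro ext)
  fix i j
  show "mat_mult id_mat A i j = A i j"
    unfolding mat_mult_def id_mat_def
    by (subst infsum_fin_supp[of "{i}"]) auto
qed

lemma assoc_lower:
  assumes A: "lower_tri A" and B: "lower_tri B" and C: "lower_tri C"
  shows "mat_mult (mat_mult A B) C = mat_mult A (mat_mult B C)"
proof (intro ext)
  fix i j
  have AB: "lower_tri (mat_mult A B)" using A B by (rule lower_mult)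
  have "mat_mult (mat_mult A B) C i j = (\<Sum>k\<le>i. (\<Sum>m\<le>i. A i m * B m k) * C k j)"
    using AB A by (simp add: mm_lower)
  also have "\<dots> = (\<Sum>k\<le>i. \<Sum>m\<le>i. A i m * B m k * C k j)"
    by (simp add: sum_distrib_right)
  also have "\<dots> = (\<Sum>m\<le>i. \<Sum>k\<le>i. A i m * B m k * C k j)"
    by (rule sum.swap)
  also have "\<dots> = (\<Sum>m\<le>i. A i m * (\<Sum>k\<le>m. B m k * C k j))"
  proof (rule sum.cong[OF refl])
    fix m assume m: "m \<in> {..i}"
    have "(\<Sum>k\<le>i. A i m * B m k * C k j) = (\<Sum>k\<le>m. A i m * B m k * C k j)"
    proof (rule sum.mono_neutral_right)
      show "\<forall>k\<in>{..i} - {..m}. A i m * B m k * C k j = 0"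
        using B unfolding lower_tri_def by auto
    qed (use m in auto)
    then show "(\<Sum>k\<le>i. A i m * B m k * C k j) = A i m * (\<Sum>k\<le>m. B m k * C k j)"
      by (simp add: sum_distrib_left mult.assoc)
  qed
  also have "\<dots> = mat_mult A (mat_mult B C) i j"
    using A B by (simp add: mm_lower)
  finally show "mat_mult (mat_mult A B) C i j = mat_mult A (mat_mult B C) i j" .
qed

function rinvL :: "imat \<Rightarrow> nat \<Rightarrow> nat \<Rightarrow> real" where
  "rinvL T i j = (if i < j then 0 else if i = j then 1 / T j j
      else - (\<Sum>m\<in>{j..<i}. T i m * rinvL T m j) / T i i)"
  by auto
termination by (relation "Wellfounded.measure (\<lambda>(T,i,j). i)") auto

declare rinvL.simps[simp del]

lemma rinvL_lower: "lower_tri (rinvL T)"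
  unfolding lower_tri_def by (subst rinvL.simps) auto

lemma rinvL_right:
  assumes T: "lower_tri T" and D: "\<And>k. T k k \<noteq> 0"
  shows "mat_mult T (rinvL T) = id_mat"
proof (intro ext)
  fix i j
  have e: "mat_mult T (rinvL T) i j = (\<Sum>m\<le>i. T i m * rinvL T m j)" using T by (simp add: mm_lower)
  show "mat_mult T (rinvL T) i j = id_mat i j"
  proof (cases "i < j")
    case True
    then show ?thesis unfolding e id_mat_def using rinvL_lower[of T] unfolding lower_tri_def
      by (auto intro!: sum.neutral)
  next
    case False
    have s: "(\<Sum>m\<le>i. T i m * rinvL T m j) = (\<Sum>m\<in>{j..<i}. T i m * rinvL T m j) + T i i * rinvL T i j
         + (\<Sum>m\<in>{..<j}. T i m * rinvL T m j)"
    proof -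
      have "{..i} = insert i ({j..<i} \<union> {..<j})" using False by auto
      moreover have "sum (\<lambda>m. T i m * rinvL T m j) ({j..<i} \<union> {..<j}) = (\<Sum>m\<in>{j..<i}. T i m * rinvL T m j) + (\<Sum>m\<in>{..<j}. T i m * rinvL T m j)"
        by (rule sum.union_disjoint) auto
      moreover have "sum (\<lambda>m. T i m * rinvL T m j) (insert i ({j..<i} \<union> {..<j})) = T i i * rinvL T i j + sum (\<lambda>m. T i m * rinvL T m j) ({j..<i} \<union> {..<j})"
        by (rule sum.insert) (use False in auto)
      ultimately show ?thesis by simp
    qed
    have z: "(\<Sum>m\<in>{..<j}. T i m * rinvL T m j) = 0"
      using rinvL_lower[of T] unfolding lower_tri_def by (auto intro!: sum.neutral)
    show ?thesis
    proof (cases "i = j")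
      case True
      then show ?thesis unfolding e s z id_mat_def using D[of j] by (simp add: rinvL.simps[of T j j])
    next
      case ne: False
      have "T i i * rinvL T i j = - (\<Sum>m\<in>{j..<i}. T i m * rinvL T m j)"
        using D[of i] False ne by (subst rinvL.simps) auto
      then show ?thesis unfolding e s z id_mat_def using ne by simp
    qed
  qed
qed

lemma diag_prod_lower:
  assumes "lower_tri A" "lower_tri B"
  shows "mat_mult A B k k = A k k * B k k"
proof -
  have "mat_mult A B k k = (\<Sum>m\<le>k. A k m * B m k)" using assms by (simp add: mm_lower)
  also have "\<dots> = (\<Sum>m\<in>{k}. A k m * B m k)"
    by (rule sum.mono_neutral_right) (use assms in \<open>auto simp: lower_tri_def\<close>)
  finally show ?thesis by simp
qed

lemma two_sided_lower:
  assumes A: "lower_tri A" and B: "lower_tri B" and AB: "mat_mult A B = id_mat"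
  shows "mat_mult B A = id_mat"
proof -
  have D: "B k k \<noteq> 0" for k
  proof
    assume "B k k = 0"
    then have "mat_mult A B k k = 0" using diag_prod_lower[OF A B] by simp
    then show False using AB by (simp add: id_mat_def)
  qed
  let ?R = "rinvL B"
  have BR: "mat_mult B ?R = id_mat" by (rule rinvL_right[OF B D])
  have "A = mat_mult A (mat_mult B ?R)" by (simp add: BR mm_id_right)
  also have "\<dots> = mat_mult (mat_mult A B) ?R" using assoc_lower[OF A B rinvL_lower] by simp
  also have "\<dots> = ?R" by (simp add: AB mm_id_left)
  finally show ?thesis using BR by simp
qed

definition tr :: "imat \<Rightarrow> imat" where "tr A = (\<lambda>i j. A j i)"

lemma tr_mult: "mat_mult (tr B) (tr A) = tr (mat_mult A B)"
  unfolding tr_def mat_mult_def by (simp add: mult.commute)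

lemma tr_tr: "tr (tr A) = A" unfolding tr_def by simp
lemma tr_id: "tr id_mat = id_mat" unfolding tr_def id_mat_def by (auto intro!: ext)
lemma upper_tr: "upper_tri A \<Longrightarrow> lower_tri (tr A)" unfolding tr_def upper_tri_def lower_tri_def by auto

lemma two_sided_upper:
  assumes A: "upper_tri A" and B: "upper_tri B" and AB: "mat_mult A B = id_mat"
  shows "mat_mult B A = id_mat"
proof -
  have "mat_mult (tr B) (tr A) = id_mat" by (simp add: tr_mult AB tr_id)
  then have "mat_mult (tr A) (tr B) = id_mat" by (rule two_sided_lower[OF upper_tr[OF B] upper_tr[OF A]])
  then have "tr (mat_mult B A) = id_mat" by (simp add: tr_mult)
  then have "tr (tr (mat_mult B A)) = tr id_mat" by simp
  then show ?thesis by (simp add: tr_tr tr_id)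
qed



function doolF :: "imat \<Rightarrow> nat \<Rightarrow> nat \<Rightarrow> real" where
  "doolF M i j = (if i \<le> j then M i j - (\<Sum>m<i. doolF M i m * doolF M m j)
     else (M i j - (\<Sum>m<j. doolF M i m * doolF M m j)) / doolF M j j)"
  by auto
termination
  by (relation "measures [\<lambda>(M,i,j). min i j, \<lambda>(M,i,j). if i \<le> j then 0 else 1]") auto

declare doolF.simps[simp del]

definition Lm :: "imat \<Rightarrow> imat" where
  "Lm M i j = (if i = j then 1 else if j < i then doolF M i j else 0)"
definition Um :: "imat \<Rightarrow> imat" where
  "Um M i j = (if i \<le> j then doolF M i j else 0)"

lemma Lm_lower: "lower_tri (Lm M)" unfolding lower_tri_def Lm_def by auto
lemma Um_upper: "upper_tri (Um M)" unfolding upper_tri_def Um_def by auto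

function xv :: "imat \<Rightarrow> nat \<Rightarrow> nat \<Rightarrow> real" where
  "xv M k i = (if k < i then 0 else if i = k then 1
     else - (\<Sum>m\<in>{i<..k}. Um M i m * xv M k m) / Um M i i)"
  by auto
termination by (relation "Wellfounded.measure (\<lambda>(M,k,i). k - i)") auto

declare xv.simps[simp del]

lemma LU_entry:
  assumes "i \<le> j \<or> doolF M j j \<noteq> 0"
  shows "M i j = (\<Sum>m\<le>i. Lm M i m * Um M m j)"
proof (cases "i \<le> j")
  case True
  have "(\<Sum>m\<le>i. Lm M i m * Um M m j) = (\<Sum>m<i. Lm M i m * Um M m j) + Lm M i i * Um M i j"
    by (simp add: lessThan_Suc_atMost[symmetric])
  also have "(\<Sum>m<i. Lm M i m * Um M m j) = (\<Sum>m<i. doolF M i m * doolF M m j)"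
    using True by (intro sum.cong) (auto simp: Lm_def Um_def)
  finally have e: "(\<Sum>m\<le>i. Lm M i m * Um M m j) = (\<Sum>m<i. doolF M i m * doolF M m j) + doolF M i j"
    using True by (simp add: Lm_def Um_def)
  have "doolF M i j = M i j - (\<Sum>m<i. doolF M i m * doolF M m j)" using True by (subst doolF.simps) simp
  then show ?thesis using e by simp
next
  case False
  then have Fj: "doolF M j j \<noteq> 0" using assms by auto
  have "(\<Sum>m\<le>i. Lm M i m * Um M m j) = (\<Sum>m\<le>j. Lm M i m * Um M m j)"
    by (rule sum.mono_neutral_right) (use False in \<open>auto simp: Um_def\<close>)
  also have "\<dots> = (\<Sum>m<j. Lm M i m * Um M m j) + Lm M i j * Um M j j"
    by (simp add: lessThan_Suc_atMost[symmetric])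
  also have "(\<Sum>m<j. Lm M i m * Um M m j) = (\<Sum>m<j. doolF M i m * doolF M m j)"
    using False by (intro sum.cong) (auto simp: Lm_def Um_def)
  finally have e: "(\<Sum>m\<le>i. Lm M i m * Um M m j) = (\<Sum>m<j. doolF M i m * doolF M m j) + doolF M i j * doolF M j j"
    using False by (simp add: Lm_def Um_def)
  have "doolF M i j * doolF M j j = M i j - (\<Sum>m<j. doolF M i m * doolF M m j)"
    using False Fj by (subst doolF.simps[of M i j]) simp
  then show ?thesis using e by simp
qed

lemma Um_xv:
  assumes piv: "\<forall>m<k. doolF M m m \<noteq> 0" and mk: "m \<le> k"
  shows "(\<Sum>j\<le>k. Um M m j * xv M k j) = (if m = k then doolF M k k else 0)"
proof -
  have "(\<Sum>j\<le>k. Um M m j * xv M k j) = (\<Sum>j\<in>insert m {m<..k}. Um M m j * xv M k j)"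
    by (rule sum.mono_neutral_right) (use mk in \<open>auto simp: Um_def\<close>)
  also have "\<dots> = Um M m m * xv M k m + (\<Sum>j\<in>{m<..k}. Um M m j * xv M k j)"
    by (rule sum.insert) auto
  finally have e: "(\<Sum>j\<le>k. Um M m j * xv M k j) = Um M m m * xv M k m + (\<Sum>j\<in>{m<..k}. Um M m j * xv M k j)" .
  show ?thesis
  proof (cases "m = k")
    case True
    then show ?thesis using e by (simp add: xv.simps[of M k k] Um_def)
  next
    case False
    then have "m < k" using mk by simp
    then have "Um M m m \<noteq> 0" using piv by (simp add: Um_def)
    then have "Um M m m * xv M k m = - (\<Sum>j\<in>{m<..k}. Um M m j * xv M k j)"
      using \<open>m < k\<close> by (subst xv.simps) simp
    then show ?thesis using e False by simp
  qed
qed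

lemma A_xv:
  assumes piv: "\<forall>m<k. doolF M m m \<noteq> 0" and ik: "i \<le> k"
  shows "(\<Sum>j\<le>k. M i j * xv M k j) = (if i = k then doolF M k k else 0)"
proof -
  have "(\<Sum>j\<le>k. M i j * xv M k j) = (\<Sum>j\<le>k. (\<Sum>m\<le>i. Lm M i m * Um M m j) * xv M k j)"
  proof (rule sum.cong[OF refl])
    fix j assume j: "j \<in> {..k}"
    have "i \<le> j \<or> doolF M j j \<noteq> 0" using piv j ik by (cases "i \<le> j") auto
    then show "M i j * xv M k j = (\<Sum>m\<le>i. Lm M i m * Um M m j) * xv M k j"
      using LU_entry by metis
  qed
  also have "\<dots> = (\<Sum>m\<le>i. Lm M i m * (\<Sum>j\<le>k. Um M m j * xv M k j))"
    by (simp add: sum_distrib_left sum_distrib_right mult.assoc sum.swap[of _ "{..k}"])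
  also have "\<dots> = (\<Sum>m\<le>i. Lm M i m * (if m = k then doolF M k k else 0))"
    using Um_xv[OF piv] ik by (intro sum.cong) auto
  also have "\<dots> = (if i = k then doolF M k k else 0)"
  proof (cases "i = k")
    case True
    have "(\<Sum>m\<le>i. Lm M i m * (if m = k then doolF M k k else 0)) = Lm M i i * (if i = k then doolF M k k else 0) + (\<Sum>m<i. Lm M i m * (if m = k then doolF M k k else 0))"
      by (simp add: lessThan_Suc_atMost[symmetric])
    also have "(\<Sum>m<i. Lm M i m * (if m = k then doolF M k k else 0)) = 0" using True by (intro sum.neutral) auto
    finally show ?thesis using True by (simp add: Lm_def)
  next
    case False
    have "(\<Sum>m\<le>i. Lm M i m * (if m = k then doolF M k k else 0)) = 0"
      using False ik by (intro sum.neutral) auto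
    then show ?thesis using False by simp
  qed
  finally show ?thesis .
qed

lemma pivot_ge:
  assumes piv: "\<forall>m<k. doolF M m m \<ge> c" and c: "c > 0"
    and ell: "\<And>x. (\<Sum>i\<le>k. x i * (\<Sum>j\<le>k. M i j * x j)) \<ge> c * (\<Sum>i\<le>k. (x i)\<^sup>2)"
  shows "doolF M k k \<ge> c"
proof -
  have piv': "\<forall>m<k. doolF M m m \<noteq> 0" using piv c by force
  have "(\<Sum>i\<le>k. xv M k i * (\<Sum>j\<le>k. M i j * xv M k j)) = (\<Sum>i\<le>k. xv M k i * (if i = k then doolF M k k else 0))"
    using A_xv[OF piv'] by (intro sum.cong) auto
  also have "\<dots> = xv M k k * doolF M k k + (\<Sum>i<k. xv M k i * (if i = k then doolF M k k else 0))"
    by (simp add: lessThan_Suc_atMost[symmetric])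
  also have "(\<Sum>i<k. xv M k i * (if i = k then doolF M k k else 0)) = 0" by (intro sum.neutral) auto
  also have "xv M k k = 1" by (simp add: xv.simps[of M k k])
  finally have q: "(\<Sum>i\<le>k. xv M k i * (\<Sum>j\<le>k. M i j * xv M k j)) = doolF M k k" by simp
  have "(\<Sum>i\<le>k. (xv M k i)\<^sup>2) \<ge> (\<Sum>i\<in>{k}. (xv M k i)\<^sup>2)"
    by (rule sum_mono2) auto
  then have "(\<Sum>i\<le>k. (xv M k i)\<^sup>2) \<ge> 1" by (simp add: xv.simps[of M k k])
  then have "c * (\<Sum>i\<le>k. (xv M k i)\<^sup>2) \<ge> c" using c by simp
  then show ?thesis using ell[of "xv M k"] q by linarith
qed



lemma exp_abs_bound: fixes s :: real shows "\<bar>1 - exp s\<bar> \<le> exp \<bar>s\<bar> - 1"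
proof (cases "s \<ge> 0")
  case True
  then have "exp s \<ge> 1" using exp_ge_add_one_self[of s] by linarith
  then show ?thesis using True by simp
next
  case False
  have "exp s \<ge> 1 + s" by (rule exp_ge_add_one_self)
  moreover have "exp (-s) \<ge> 1 + (-s)" by (rule exp_ge_add_one_self)
  moreover have "exp s \<le> 1" using False by simp
  ultimately have "1 - exp s \<le> exp (- s) - 1" by linarith
  moreover have "\<bar>1 - exp s\<bar> = 1 - exp s" using \<open>exp s \<le> 1\<close> by simp
  moreover have "\<bar>s\<bar> = - s" using False by simp
  ultimately show ?thesis by simp
qed

lemma decay:
  fixes A :: imat and d G :: "nat \<Rightarrow> nat \<Rightarrow> real" and y :: "nat \<Rightarrow> real"
  assumes c: "c > 0" and eps: "\<epsilon> \<ge> 0" and i0: "i0 \<le> k"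
   and ell: "\<And>x. (\<Sum>i\<le>k. x i * (\<Sum>j\<le>k. A i j * x j)) \<ge> c * (\<Sum>i\<le>k. (x i)\<^sup>2)"
   and eq: "\<And>i. i \<le> k \<Longrightarrow> (\<Sum>j\<le>k. A i j * y j) = (if i = i0 then 1 else 0)"
   and dtri: "\<And>i j l. d i l \<le> d i j + d j l" and dsym: "\<And>i j. d i j = d j i"
   and d0: "d i0 i0 = 0" and dnn: "\<And>i j. d i j \<ge> 0"
   and G: "\<And>i j. \<bar>A i j\<bar> * (exp (\<epsilon> * d i j) - 1) \<le> G i j"
   and Gr: "\<And>i. i \<le> k \<Longrightarrow> (\<Sum>j\<le>k. G i j) \<le> c/2"
   and Gc: "\<And>j. j \<le> k \<Longrightarrow> (\<Sum>i\<le>k. G i j) \<le> c/2"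
   and ik: "i \<le> k"
  shows "\<bar>y i\<bar> \<le> (2/c) * exp (- \<epsilon> * d i i0)"
proof -
  define w where "w i = exp (\<epsilon> * d i i0)" for i
  define z where "z i = w i * y i" for i
  define E where "E i j = A i j * (1 - w i / w j)" for i j
  define N where "N = (\<Sum>i\<le>k. (z i)\<^sup>2)"
  have wpos: "w i > 0" for i by (simp add: w_def)
  have w0: "w i0 = 1" by (simp add: w_def d0)
  have Gnn: "\<bar>E i j\<bar> \<le> G i j" for i j
  proof -
    have "w i / w j = exp (\<epsilon> * (d i i0 - d j i0))"
      by (simp add: w_def exp_diff[symmetric] algebra_simps)
    moreover have "\<bar>\<epsilon> * (d i i0 - d j i0)\<bar> \<le> \<epsilon> * d i j"
    proof -
      have "d i i0 - d j i0 \<le> d i j" using dtri[of i i0 j] by simp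
      moreover have "d j i0 - d i i0 \<le> d i j" using dtri[of j i0 i] dsym[of j i] by simp
      ultimately have "\<bar>d i i0 - d j i0\<bar> \<le> d i j" by simp
      then show ?thesis using eps by (simp add: abs_mult mult_left_mono)
    qed
    ultimately have "\<bar>1 - w i / w j\<bar> \<le> exp (\<epsilon> * d i j) - 1"
      using exp_abs_bound[of "\<epsilon> * (d i i0 - d j i0)"] by (smt (verit) exp_le_cancel_iff)
    then have "\<bar>E i j\<bar> \<le> \<bar>A i j\<bar> * (exp (\<epsilon> * d i j) - 1)"
      unfolding E_def abs_mult by (intro mult_left_mono) auto
    then show ?thesis using G[of i j] by simp
  qed
  have row: "(\<Sum>j\<le>k. A i j * z j) = w i * (if i = i0 then 1 else 0) + (\<Sum>j\<le>k. E i j * z j)"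
    if "i \<le> k" for i
  proof -
    have "(\<Sum>j\<le>k. E i j * z j) = (\<Sum>j\<le>k. A i j * z j - w i * (A i j * y j))"
    proof (rule sum.cong[OF refl])
      fix j
      have "w j \<noteq> 0" using wpos[of j] by simp
      then show "E i j * z j = A i j * z j - w i * (A i j * y j)"
        unfolding E_def z_def by (simp add: field_simps)
    qed
    also have "\<dots> = (\<Sum>j\<le>k. A i j * z j) - w i * (\<Sum>j\<le>k. A i j * y j)"
      by (simp add: sum_subtractf sum_distrib_left)
    finally show ?thesis using eq[OF that] by simp
  qed
  define R where "R = (\<Sum>i\<le>k. z i * (\<Sum>j\<le>k. E i j * z j))"
  have Q: "(\<Sum>i\<le>k. z i * (\<Sum>j\<le>k. A i j * z j)) = z i0 + R"
  proof -
    have "(\<Sum>i\<le>k. z i * (\<Sum>j\<le>k. A i j * z j))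
        = (\<Sum>i\<le>k. z i * (w i * (if i = i0 then 1 else 0))) + R"
      unfolding R_def by (simp add: row distrib_left sum.distrib)
    also have "(\<Sum>i\<le>k. z i * (w i * (if i = i0 then 1 else 0))) = (\<Sum>i\<le>k. if i = i0 then z i * w i else 0)"
      by (intro sum.cong) auto
    also have "\<dots> = z i0" using i0 w0 by (simp add: sum.delta)
    finally show ?thesis .
  qed
  have Rb: "R \<le> (c/2) * N"
  proof -
    have "R \<le> (\<Sum>i\<le>k. \<Sum>j\<le>k. G i j * (((z i)\<^sup>2 + (z j)\<^sup>2) / 2))"
      unfolding R_def sum_distrib_left
    proof (intro sum_mono)
      fix i j
      have ab: "\<bar>z i\<bar> * \<bar>z j\<bar> \<le> ((z i)\<^sup>2 + (z j)\<^sup>2) / 2"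
      proof -
        have "0 \<le> (\<bar>z i\<bar> - \<bar>z j\<bar>)\<^sup>2" by simp
        then show ?thesis by (simp add: power2_eq_square algebra_simps)
      qed
      have "z i * (E i j * z j) \<le> \<bar>E i j\<bar> * (\<bar>z i\<bar> * \<bar>z j\<bar>)"
      proof -
        have "z i * (E i j * z j) \<le> \<bar>z i * (E i j * z j)\<bar>" by (rule abs_ge_self)
        then show ?thesis by (simp add: abs_mult mult_ac)
      qed
      also have "\<dots> \<le> G i j * (((z i)\<^sup>2 + (z j)\<^sup>2) / 2)"
        by (rule mult_mono[OF Gnn ab]) (auto intro: order_trans[OF abs_ge_zero Gnn])
      finally show "z i * (E i j * z j) \<le> G i j * (((z i)\<^sup>2 + (z j)\<^sup>2) / 2)" .
    qed
    also have "\<dots> = ((\<Sum>i\<le>k. (z i)\<^sup>2 * (\<Sum>j\<le>k. G i j)) + (\<Sum>j\<le>k. (z j)\<^sup>2 * (\<Sum>i\<le>k. G i j))) / 2"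
    proof -
      have a: "(\<Sum>i\<le>k. \<Sum>j\<le>k. G i j * (((z i)\<^sup>2 + (z j)\<^sup>2) / 2))
         = ((\<Sum>i\<le>k. \<Sum>j\<le>k. G i j * (z i)\<^sup>2) + (\<Sum>i\<le>k. \<Sum>j\<le>k. G i j * (z j)\<^sup>2)) / 2"
      proof -
        have "(\<Sum>i\<le>k. \<Sum>j\<le>k. G i j * (((z i)\<^sup>2 + (z j)\<^sup>2) / 2))
           = (\<Sum>i\<le>k. \<Sum>j\<le>k. (G i j * (z i)\<^sup>2 + G i j * (z j)\<^sup>2) / 2)"
          by (intro sum.cong refl) (simp add: distrib_left)
        also have "\<dots> = (\<Sum>i\<le>k. \<Sum>j\<le>k. (G i j * (z i)\<^sup>2 + G i j * (z j)\<^sup>2)) / 2"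
          by (simp add: sum_divide_distrib)
        also have "\<dots> = ((\<Sum>i\<le>k. \<Sum>j\<le>k. G i j * (z i)\<^sup>2) + (\<Sum>i\<le>k. \<Sum>j\<le>k. G i j * (z j)\<^sup>2)) / 2"
          by (simp add: sum.distrib)
        finally show ?thesis .
      qed
      have b: "(\<Sum>i\<le>k. \<Sum>j\<le>k. G i j * (z i)\<^sup>2) = (\<Sum>i\<le>k. (z i)\<^sup>2 * (\<Sum>j\<le>k. G i j))"
      proof (rule sum.cong[OF refl])
        fix i show "(\<Sum>j\<le>k. G i j * (z i)\<^sup>2) = (z i)\<^sup>2 * (\<Sum>j\<le>k. G i j)"
          by (simp add: sum_distrib_right mult.commute)
      qed
      have c: "(\<Sum>i\<le>k. \<Sum>j\<le>k. G i j * (z j)\<^sup>2) = (\<Sum>j\<le>k. (z j)\<^sup>2 * (\<Sum>i\<le>k. G i j))"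
      proof (subst sum.swap, rule sum.cong[OF refl])
        fix j show "(\<Sum>i\<le>k. G i j * (z j)\<^sup>2) = (z j)\<^sup>2 * (\<Sum>i\<le>k. G i j)"
          by (simp add: sum_distrib_left ac_simps)
      qed
      show ?thesis using a b c by simp
    qed
    also have "\<dots> \<le> ((\<Sum>i\<le>k. (z i)\<^sup>2 * (c/2)) + (\<Sum>j\<le>k. (z j)\<^sup>2 * (c/2))) / 2"
      by (intro divide_right_mono add_mono sum_mono mult_left_mono) (use Gr Gc in fastforce)+
    also have "\<dots> = (c/2) * N"
    proof -
      have "(\<Sum>i\<le>k. (z i)\<^sup>2 * (c/2)) = N * (c/2)" unfolding N_def by (rule sum_distrib_right[symmetric])
      then show ?thesis by simp
    qed
    finally show ?thesis .
  qed
  have main: "(c/2) * N \<le> z i0" using ell[of z] Q Rb unfolding N_def by linarith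
  have Nnn: "N \<ge> 0" unfolding N_def by (intro sum_nonneg) auto
  have zi_le: "(z j)\<^sup>2 \<le> N" if "j \<le> k" for j
  proof -
    have "(\<Sum>i\<in>{j}. (z i)\<^sup>2) \<le> N" unfolding N_def by (rule sum_mono2) (use that in auto)
    then show ?thesis by simp
  qed
  have t: "z i0 \<le> 2/c"
  proof (cases "z i0 > 0")
    case True
    have "(c/2) * z i0 * z i0 \<le> 1 * z i0"
    proof -
      have "(c/2) * (z i0)\<^sup>2 \<le> (c/2) * N" by (rule mult_left_mono[OF zi_le[OF i0]]) (use c in simp)
      then show ?thesis using main by (simp add: power2_eq_square mult.assoc)
    qed
    then have "(c/2) * z i0 \<le> 1" using True by (rule mult_right_le_imp_le)
    then show ?thesis using c by (simp add: field_simps)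
  next
    case False
    moreover have "2/c > 0" using c by simp
    ultimately show ?thesis by linarith
  qed
  have N4: "N \<le> (2/c)\<^sup>2"
  proof -
    have "(c/2) * N \<le> 2/c" using main t by linarith
    then have "N \<le> (2/c) / (c/2)" using c by (simp add: field_simps)
    then show ?thesis by (simp add: power2_eq_square)
  qed
  have "\<bar>z i\<bar> \<le> 2/c"
  proof (rule power2_le_imp_le)
    show "\<bar>z i\<bar>\<^sup>2 \<le> (2/c)\<^sup>2" using zi_le[OF ik] N4 by simp
  qed (use c in simp)
  moreover have "\<bar>y i\<bar> = \<bar>z i\<bar> * exp (- \<epsilon> * d i i0)"
    unfolding z_def w_def by (simp add: abs_mult exp_minus field_simps)
  ultimately show ?thesis using mult_right_mono[of "\<bar>z i\<bar>" "2/c" "exp (- \<epsilon> * d i i0)"] by simp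
qed



lemma cs_real:
  fixes s R T :: real
  assumes s: "s \<ge> 0" and R: "R \<ge> 0" and T: "T \<ge> 0"
    and h: "\<And>l. l > 0 \<Longrightarrow> s \<le> (l * R + T / l) / 2"
  shows "s\<^sup>2 \<le> R * T"
proof (cases "s = 0")
  case True then show ?thesis using R T by simp
next
  case False
  then have sp: "s > 0" using s by simp
  show ?thesis
  proof (cases "R > 0 \<and> T > 0")
    case True
    define l where "l = sqrt (T / R)"
    have lp: "l > 0" using True by (simp add: l_def)
    have l2: "l * l = T / R" using True unfolding l_def using real_sqrt_mult_self[of "T/R"] by simp
    have a: "l * R = sqrt (R * T)"
    proof -
      have "(l * R)\<^sup>2 = R * T" using l2 True by (simp add: power2_eq_square field_simps)
      then show ?thesis using lp True by (metis less_eq_real_def mult_nonneg_nonneg real_sqrt_unique)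
    qed
    have b: "T / l = sqrt (R * T)"
    proof -
      have "(T / l)\<^sup>2 = R * T" using l2 True lp by (simp add: power2_eq_square field_simps)
      then show ?thesis using lp True by (metis less_eq_real_def divide_nonneg_pos real_sqrt_unique)
    qed
    have "s \<le> sqrt (R * T)" using h[OF lp] a b by simp
    then have "s\<^sup>2 \<le> (sqrt (R * T))\<^sup>2" using s by (simp add: power_mono)
    then show ?thesis using R T by simp
  next
    case False
    then have "R = 0 \<or> T = 0" using R T by auto
    then show ?thesis
    proof
      assume R0: "R = 0"
      define l where "l = (T + 1) / s"
      have lp: "l > 0" using sp T by (simp add: l_def)
      have "s \<le> T / l / 2" using h[OF lp] R0 by simp
      also have "\<dots> = T * s / (2 * (T + 1))" using sp T by (simp add: l_def field_simps)
      also have "\<dots> < s" using sp T by (simp add: field_simps) (use mult_nonneg_nonneg[of T s] sp T in linarith)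
      finally show ?thesis by simp
    next
      assume T0: "T = 0"
      define l where "l = s / (R + 1)"
      have lp: "l > 0" using sp R by (simp add: l_def)
      have "s \<le> l * R / 2" using h[OF lp] T0 by simp
      also have "\<dots> = s * R / (2 * (R + 1))" using sp R by (simp add: l_def field_simps)
      also have "\<dots> < s" using sp R by (simp add: field_simps) (use mult_nonneg_nonneg[of R s] sp R in linarith)
      finally show ?thesis by simp
    qed
  qed
qed

lemma infsum_finite_sum:
  fixes f :: "nat \<Rightarrow> nat \<Rightarrow> real"
  assumes "finite F" "\<And>i. i \<in> F \<Longrightarrow> f i summable_on UNIV"
  shows "(\<lambda>j. \<Sum>i\<in>F. f i j) summable_on UNIV \<and> infsum (\<lambda>j. \<Sum>i\<in>F. f i j) UNIV = (\<Sum>i\<in>F. infsum (f i) UNIV)"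
  using assms
proof (induction F rule: finite_induct)
  case empty then show ?case by simp
next
  case (insert a F)
  have sa: "f a summable_on UNIV" using insert by simp
  have IH: "(\<lambda>j. \<Sum>i\<in>F. f i j) summable_on UNIV \<and> infsum (\<lambda>j. \<Sum>i\<in>F. f i j) UNIV = (\<Sum>i\<in>F. infsum (f i) UNIV)"
    using insert by simp
  have e: "(\<lambda>j. \<Sum>i\<in>insert a F. f i j) = (\<lambda>j. f a j + (\<Sum>i\<in>F. f i j))"
    using insert by simp
  show ?case unfolding e using summable_on_add[OF sa conjunct1[OF IH]] infsum_add[OF sa conjunct1[OF IH]] IH insert
    by simp
qed

lemma schur:
  fixes A :: imat and d :: "nat \<Rightarrow> nat \<Rightarrow> real"
  assumes dsym: "\<And>i j. d i j = d j i" and dnn: "\<And>i j. d i j \<ge> 0"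
    and ms: "metric_summable d" and eps: "\<epsilon> > 0" and K: "K \<ge> 0"
    and Ab: "\<And>i j. \<bar>A i j\<bar> \<le> K * exp (- \<epsilon> * d i j)"
  shows "bounded_l2 A"
proof -
  define e where "e i j = exp (- \<epsilon> * d i j)" for i j
  have esum: "\<And>i. e i summable_on UNIV" and bdd: "bdd_above (range (\<lambda>i. infsum (e i) UNIV))"
    using ms eps unfolding metric_summable_def e_def by auto
  obtain S where S: "\<And>i. infsum (e i) UNIV \<le> S" using bdd by (auto simp: bdd_above_def)
  have enn: "e i j \<ge> 0" for i j by (simp add: e_def)
  have ele1: "e i j \<le> 1" for i j using dnn[of i j] eps by (simp add: e_def mult_nonneg_nonneg)
  have Snn: "S \<ge> 0" using S[of 0] infsum_nonneg[of UNIV "e 0"] enn by (meson order.trans)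
  define R where "R = K * S"
  have Rnn: "R \<ge> 0" using K Snn by (simp add: R_def)
  have Ab': "\<bar>A i j\<bar> \<le> K * e i j" for i j using Ab by (simp add: e_def)
  have Aabs_sum: "(\<lambda>j. \<bar>A i j\<bar>) summable_on UNIV" for i
    by (rule summable_on_comparison_test[OF summable_on_cmult_right[OF esum]]) (use Ab' in auto)
  have Arow: "infsum (\<lambda>j. \<bar>A i j\<bar>) UNIV \<le> R" for i
  proof -
    have "infsum (\<lambda>j. \<bar>A i j\<bar>) UNIV \<le> infsum (\<lambda>j. K * e i j) UNIV"
      by (rule infsum_mono[OF Aabs_sum summable_on_cmult_right[OF esum]]) (use Ab' in auto)
    also have "\<dots> = K * infsum (e i) UNIV" by (rule infsum_cmult_right) (use esum in auto)
    also have "\<dots> \<le> R" unfolding R_def using S[of i] K by (simp add: mult_left_mono)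
    finally show ?thesis .
  qed
  have Acol: "(\<Sum>i\<in>F. \<bar>A i j\<bar>) \<le> R" if "finite F" for F j
  proof -
    have "(\<Sum>i\<in>F. \<bar>A i j\<bar>) \<le> (\<Sum>i\<in>F. K * e j i)"
      by (intro sum_mono) (use Ab' dsym in \<open>auto simp: e_def\<close>)
    also have "\<dots> = K * (\<Sum>i\<in>F. e j i)" by (simp add: sum_distrib_left)
    also have "(\<Sum>i\<in>F. e j i) \<le> infsum (e j) UNIV"
      by (rule finite_sum_le_infsum[OF esum that]) (auto simp: enn)
    then have "K * (\<Sum>i\<in>F. e j i) \<le> K * S" using S[of j] K by (meson mult_left_mono order.trans)
    finally show ?thesis by (simp add: R_def)
  qed
  show ?thesis unfolding bounded_l2_def
  proof (intro exI[of _ "R * R"] conjI allI impI)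
    show "0 \<le> R * R" using Rnn by simp
    fix x assume x: "ell2 x"
    have xs: "(\<lambda>j. (x j)\<^sup>2) summable_on UNIV" using x by (simp add: ell2_def)
    define N where "N = infsum (\<lambda>j. (x j)\<^sup>2) UNIV"
    have T_sum: "(\<lambda>j. \<bar>A i j\<bar> * (x j)\<^sup>2) summable_on UNIV" for i
    proof (rule summable_on_comparison_test[OF summable_on_cmult_right[OF xs, of K]])
      fix j
      have "\<bar>A i j\<bar> \<le> K" using Ab'[of i j] ele1[of i j] K by (meson mult_left_le order.trans)
      then show "\<bar>A i j\<bar> * (x j)\<^sup>2 \<le> K * (x j)\<^sup>2" by (simp add: mult_right_mono)
    qed simp
    have s_sum: "(\<lambda>j. \<bar>A i j\<bar> * \<bar>x j\<bar>) summable_on UNIV" for i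
    proof (rule summable_on_comparison_test[OF summable_on_add[OF Aabs_sum T_sum]])
      fix j
      have "\<bar>x j\<bar> \<le> 1 + (x j)\<^sup>2"
      proof (cases "\<bar>x j\<bar> \<le> 1")
        case True then show ?thesis using zero_le_power2[of "x j"] by linarith
      next
        case False
        then have "\<bar>x j\<bar> * 1 \<le> \<bar>x j\<bar> * \<bar>x j\<bar>" by (intro mult_left_mono) auto
        then show ?thesis by (simp add: power2_eq_square)
      qed
      then have "\<bar>A i j\<bar> * \<bar>x j\<bar> \<le> \<bar>A i j\<bar> * (1 + (x j)\<^sup>2)" by (simp add: mult_left_mono)
      then show "\<bar>A i j\<bar> * \<bar>x j\<bar> \<le> \<bar>A i j\<bar> + \<bar>A i j\<bar> * (x j)\<^sup>2" by (simp add: algebra_simps)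
    qed simp
    have row_sum: "(\<lambda>j. A i j * x j) summable_on UNIV" for i
    proof -
      have "(\<lambda>j. norm (A i j * x j)) summable_on UNIV" using s_sum[of i] by (simp add: abs_mult)
      then show ?thesis using summable_on_iff_abs_summable_on_real by blast
    qed
    then show "(\<lambda>j. A i j * x j) summable_on UNIV" for i by blast
    define y where "y = mat_vec A x"
    define T where "T i = infsum (\<lambda>j. \<bar>A i j\<bar> * (x j)\<^sup>2) UNIV" for i
    have yT: "(y i)\<^sup>2 \<le> R * T i" for i
    proof -
      define s where "s = infsum (\<lambda>j. \<bar>A i j\<bar> * \<bar>x j\<bar>) UNIV"
      have ys: "\<bar>y i\<bar> \<le> s"
      proof -
        have "norm (infsum (\<lambda>j. A i j * x j) UNIV) \<le> infsum (\<lambda>j. norm (A i j * x j)) UNIV"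
          by (rule norm_infsum_bound) (use s_sum[of i] in \<open>simp add: abs_mult\<close>)
        then show ?thesis by (simp add: y_def mat_vec_def s_def abs_mult)
      qed
      have snn: "s \<ge> 0" unfolding s_def by (rule infsum_nonneg) simp
      have Tnn: "T i \<ge> 0" unfolding T_def by (rule infsum_nonneg) simp
      have "s\<^sup>2 \<le> R * T i"
      proof (rule cs_real[OF snn Rnn Tnn])
        fix l :: real assume l: "l > 0"
        define g where "g j = l * \<bar>A i j\<bar> + inverse l * (\<bar>A i j\<bar> * (x j)\<^sup>2)" for j
        have g1: "(\<lambda>j. l * \<bar>A i j\<bar>) summable_on UNIV" by (rule summable_on_cmult_right[OF Aabs_sum])
        have g2: "(\<lambda>j. inverse l * (\<bar>A i j\<bar> * (x j)\<^sup>2)) summable_on UNIV" by (rule summable_on_cmult_right[OF T_sum])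
        have gs: "g summable_on UNIV" unfolding g_def by (rule summable_on_add[OF g1 g2])
        have s2: "(\<lambda>j. 2 * (\<bar>A i j\<bar> * \<bar>x j\<bar>)) summable_on UNIV" by (rule summable_on_cmult_right[OF s_sum])
        have "infsum (\<lambda>j. 2 * (\<bar>A i j\<bar> * \<bar>x j\<bar>)) UNIV \<le> infsum g UNIV"
        proof (rule infsum_mono[OF s2 gs])
          fix j
          have "2 * \<bar>x j\<bar> \<le> l + inverse l * (x j)\<^sup>2"
          proof -
            have "0 \<le> inverse l * (l - \<bar>x j\<bar>)\<^sup>2" using l by simp
            also have "inverse l * (l - \<bar>x j\<bar>)\<^sup>2 = l + inverse l * (x j)\<^sup>2 - 2 * \<bar>x j\<bar>"
              using l by (simp add: power2_eq_square field_simps)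
            finally show ?thesis by simp
          qed
          then have "\<bar>A i j\<bar> * (2 * \<bar>x j\<bar>) \<le> \<bar>A i j\<bar> * (l + inverse l * (x j)\<^sup>2)" by (simp add: mult_left_mono)
          then show "2 * (\<bar>A i j\<bar> * \<bar>x j\<bar>) \<le> g j" unfolding g_def by (simp add: algebra_simps)
        qed
        moreover have "infsum (\<lambda>j. 2 * (\<bar>A i j\<bar> * \<bar>x j\<bar>)) UNIV = 2 * s"
          unfolding s_def by (rule infsum_cmult_right) (use s_sum in auto)
        moreover have "infsum g UNIV = l * infsum (\<lambda>j. \<bar>A i j\<bar>) UNIV + inverse l * T i"
        proof -
          have "infsum g UNIV = infsum (\<lambda>j. l * \<bar>A i j\<bar>) UNIV + infsum (\<lambda>j. inverse l * (\<bar>A i j\<bar> * (x j)\<^sup>2)) UNIV"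
            unfolding g_def by (rule infsum_add[OF g1 g2])
          also have "infsum (\<lambda>j. l * \<bar>A i j\<bar>) UNIV = l * infsum (\<lambda>j. \<bar>A i j\<bar>) UNIV"
            by (rule infsum_cmult_right) (use Aabs_sum in auto)
          also have "infsum (\<lambda>j. inverse l * (\<bar>A i j\<bar> * (x j)\<^sup>2)) UNIV = inverse l * T i"
            unfolding T_def by (rule infsum_cmult_right) (use T_sum in auto)
          finally show ?thesis .
        qed
        moreover have "l * infsum (\<lambda>j. \<bar>A i j\<bar>) UNIV \<le> l * R"
          using Arow[of i] l by (simp add: mult_left_mono)
        ultimately have "2 * s \<le> l * R + inverse l * T i" by linarith
        moreover have e: "T i / l = inverse l * T i" by (simp add: field_simps)
        ultimately show "s \<le> (l * R + T i / l) / 2" unfolding e by (simp add: field_simps)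
      qed
      moreover have "(y i)\<^sup>2 \<le> s\<^sup>2"
        using power_mono[OF ys abs_ge_zero, of 2] by simp
      ultimately show ?thesis by linarith
    qed
    have fin: "(\<Sum>i\<in>F. (y i)\<^sup>2) \<le> R * R * N" if "finite F" for F
    proof -
      have "(\<Sum>i\<in>F. (y i)\<^sup>2) \<le> (\<Sum>i\<in>F. R * T i)" by (intro sum_mono yT)
      also have "\<dots> = R * (\<Sum>i\<in>F. T i)" by (simp add: sum_distrib_left)
      also have "(\<Sum>i\<in>F. T i) = infsum (\<lambda>j. \<Sum>i\<in>F. \<bar>A i j\<bar> * (x j)\<^sup>2) UNIV"
        using infsum_finite_sum[OF that, of "\<lambda>i j. \<bar>A i j\<bar> * (x j)\<^sup>2"] T_sum unfolding T_def by simp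
      also have "\<dots> \<le> infsum (\<lambda>j. R * (x j)\<^sup>2) UNIV"
      proof (rule infsum_mono)
        show "(\<lambda>j. \<Sum>i\<in>F. \<bar>A i j\<bar> * (x j)\<^sup>2) summable_on UNIV"
          using infsum_finite_sum[OF that, of "\<lambda>i j. \<bar>A i j\<bar> * (x j)\<^sup>2"] T_sum by simp
        show "(\<lambda>j. R * (x j)\<^sup>2) summable_on UNIV" by (rule summable_on_cmult_right[OF xs])
        fix j
        show "(\<Sum>i\<in>F. \<bar>A i j\<bar> * (x j)\<^sup>2) \<le> R * (x j)\<^sup>2"
          using Acol[OF that, of j] by (simp add: sum_distrib_right[symmetric] mult_right_mono)
      qed
      also have "\<dots> = R * N" unfolding N_def by (rule infsum_cmult_right) (use xs in auto)
      finally show ?thesis using Rnn by (simp add: mult_left_mono mult.assoc)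
    qed
    have ys: "(\<lambda>i. (y i)\<^sup>2) summable_on UNIV"
      by (rule nonneg_bdd_above_summable_on) (use fin in \<open>auto intro!: bdd_aboveI2\<close>)
    then show "ell2 (mat_vec A x)" by (simp add: ell2_def y_def)
    have "ell2_normsq y \<le> R * R * N"
      unfolding ell2_normsq_def by (rule infsum_le_finite_sums[OF ys]) (use fin in auto)
    then show "ell2_normsq (mat_vec A x) \<le> R * R * ell2_normsq x"
      by (simp add: y_def N_def ell2_normsq_def)
  qed
qed



lemma expm1_le: fixes x :: real assumes "x \<ge> 0" shows "exp x - 1 \<le> x * exp x"
proof -
  have "exp (-x) \<ge> 1 + (-x)" by (rule exp_ge_add_one_self)
  then have "exp (-x) * exp x \<ge> (1 - x) * exp x" by (simp add: mult_right_mono)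
  then have "1 \<ge> (1 - x) * exp x" by (simp add: exp_minus)
  then show ?thesis by (simp add: algebra_simps)
qed

lemma le_exp_div: fixes x \<rho> :: real assumes "\<rho> > 0" shows "x \<le> exp (\<rho> * x) / \<rho>"
proof -
  have "\<rho> * x \<le> exp (\<rho> * x)" using exp_ge_add_one_self[of "\<rho> * x"] by linarith
  then show ?thesis using assms by (simp add: field_simps)
qed

lemma conv_bound1:
  fixes d :: "nat \<Rightarrow> nat \<Rightarrow> real" and P Q :: "nat \<Rightarrow> real"
  assumes dtri: "\<And>i j l. d i l \<le> d i j + d j l" and dnn: "\<And>i j. d i j \<ge> 0"
    and eps: "0 \<le> \<epsilon>" "\<epsilon> \<le> \<gamma>/4" and ab: "a \<ge> 0" "b \<ge> 0"
    and P: "\<And>m. \<bar>P m\<bar> \<le> a * exp (- \<epsilon> * d i m)"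
    and Q: "\<And>m. \<bar>Q m\<bar> \<le> b * exp (- (\<gamma>/2) * d m j)"
  shows "\<bar>\<Sum>m\<in>F. P m * Q m\<bar> \<le> a * b * exp (- \<epsilon> * d i j) * (\<Sum>m\<in>F. exp (- (\<gamma>/4) * d m j))"
proof -
  have "\<bar>\<Sum>m\<in>F. P m * Q m\<bar> \<le> (\<Sum>m\<in>F. \<bar>P m\<bar> * \<bar>Q m\<bar>)"
    by (rule order.trans[OF sum_abs]) (simp add: abs_mult)
  also have "\<dots> \<le> (\<Sum>m\<in>F. a * b * exp (- \<epsilon> * d i j) * exp (- (\<gamma>/4) * d m j))"
  proof (rule sum_mono)
    fix m
    have "\<bar>P m\<bar> * \<bar>Q m\<bar> \<le> (a * exp (- \<epsilon> * d i m)) * (b * exp (- (\<gamma>/2) * d m j))"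
      by (rule mult_mono[OF P Q]) (use ab in auto)
    also have "\<dots> = a * b * exp (- \<epsilon> * d i m + - (\<gamma>/2) * d m j)"
      by (simp only: exp_add mult_ac)
    also have "\<dots> \<le> a * b * exp (- \<epsilon> * d i j + - (\<gamma>/4) * d m j)"
    proof -
      have "\<epsilon> * d i j \<le> \<epsilon> * d i m + \<epsilon> * d m j"
        using mult_left_mono[OF dtri[of i j m] eps(1)] by (simp add: algebra_simps)
      moreover have "\<epsilon> * d m j \<le> (\<gamma>/4) * d m j" using mult_right_mono[OF eps(2) dnn[of m j]] by simp
      ultimately have "- \<epsilon> * d i m + - (\<gamma>/2) * d m j \<le> - \<epsilon> * d i j + - (\<gamma>/4) * d m j"
        using dnn[of m j] by (simp add: algebra_simps)
      then show ?thesis using ab by (intro mult_left_mono) auto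
    qed
    also have "\<dots> = a * b * exp (- \<epsilon> * d i j) * exp (- (\<gamma>/4) * d m j)"
      by (simp only: exp_add mult_ac)
    finally show "\<bar>P m\<bar> * \<bar>Q m\<bar> \<le> a * b * exp (- \<epsilon> * d i j) * exp (- (\<gamma>/4) * d m j)" .
  qed
  also have "\<dots> = a * b * exp (- \<epsilon> * d i j) * (\<Sum>m\<in>F. exp (- (\<gamma>/4) * d m j))"
    by (simp add: sum_distrib_left)
  finally show ?thesis .
qed

lemma conv_bound2:
  fixes d :: "nat \<Rightarrow> nat \<Rightarrow> real" and P Q :: "nat \<Rightarrow> real"
  assumes dtri: "\<And>i j l. d i l \<le> d i j + d j l" and dnn: "\<And>i j. d i j \<ge> 0"
    and eps: "0 \<le> \<epsilon>" "\<epsilon> \<le> \<gamma>/4" and ab: "a \<ge> 0" "b \<ge> 0"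
    and P: "\<And>m. \<bar>P m\<bar> \<le> a * exp (- (\<gamma>/2) * d i m)"
    and Q: "\<And>m. \<bar>Q m\<bar> \<le> b * exp (- \<epsilon> * d m j)"
  shows "\<bar>\<Sum>m\<in>F. P m * Q m\<bar> \<le> a * b * exp (- \<epsilon> * d i j) * (\<Sum>m\<in>F. exp (- (\<gamma>/4) * d i m))"
proof -
  have "\<bar>\<Sum>m\<in>F. P m * Q m\<bar> \<le> (\<Sum>m\<in>F. \<bar>P m\<bar> * \<bar>Q m\<bar>)"
    by (rule order.trans[OF sum_abs]) (simp add: abs_mult)
  also have "\<dots> \<le> (\<Sum>m\<in>F. a * b * exp (- \<epsilon> * d i j) * exp (- (\<gamma>/4) * d i m))"
  proof (rule sum_mono)
    fix m
    have "\<bar>P m\<bar> * \<bar>Q m\<bar> \<le> (a * exp (- (\<gamma>/2) * d i m)) * (b * exp (- \<epsilon> * d m j))"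
      by (rule mult_mono[OF P Q]) (use ab in auto)
    also have "\<dots> = a * b * exp (- (\<gamma>/2) * d i m + - \<epsilon> * d m j)"
      by (simp only: exp_add mult_ac)
    also have "\<dots> \<le> a * b * exp (- \<epsilon> * d i j + - (\<gamma>/4) * d i m)"
    proof -
      have "\<epsilon> * d i j \<le> \<epsilon> * d i m + \<epsilon> * d m j"
        using mult_left_mono[OF dtri[of i j m] eps(1)] by (simp add: algebra_simps)
      moreover have "\<epsilon> * d i m \<le> (\<gamma>/4) * d i m" using mult_right_mono[OF eps(2) dnn[of i m]] by simp
      ultimately have "- (\<gamma>/2) * d i m + - \<epsilon> * d m j \<le> - \<epsilon> * d i j + - (\<gamma>/4) * d i m"
        using dnn[of i m] by (simp add: algebra_simps)
      then show ?thesis using ab by (intro mult_left_mono) auto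
    qed
    also have "\<dots> = a * b * exp (- \<epsilon> * d i j) * exp (- (\<gamma>/4) * d i m)"
      by (simp only: exp_add mult_ac)
    finally show "\<bar>P m\<bar> * \<bar>Q m\<bar> \<le> a * b * exp (- \<epsilon> * d i j) * exp (- (\<gamma>/4) * d i m)" .
  qed
  also have "\<dots> = a * b * exp (- \<epsilon> * d i j) * (\<Sum>m\<in>F. exp (- (\<gamma>/4) * d i m))"
    by (simp add: sum_distrib_left)
  finally show ?thesis .
qed



lemma fs_summable:
  fixes f :: "nat \<Rightarrow> real"
  assumes "finite S" "\<And>j. j \<notin> S \<Longrightarrow> f j = 0"
  shows "f summable_on UNIV"
proof -
  have "f summable_on S" using assms(1) by simp
  moreover have "f summable_on S \<longleftrightarrow> f summable_on UNIV"
    by (rule summable_on_cong_neutral) (use assms in auto)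
  ultimately show ?thesis by simp
qed

lemma section_ell:
  assumes ell: "elliptic M c"
  shows "(\<Sum>i\<le>k. x i * (\<Sum>j\<le>k. M i j * x j)) \<ge> c * (\<Sum>i\<le>k. (x i)\<^sup>2)"
proof -
  define x' where "x' i = (if i \<le> k then x i else 0)" for i
  have "ell2 x'" unfolding ell2_def by (rule fs_summable[of "{..k}"]) (auto simp: x'_def)
  then have h: "(\<Sum>\<^sub>\<infinity>i. mat_vec M x' i * x' i) \<ge> c * ell2_normsq x'"
    using ell unfolding elliptic_def by blast
  have mv: "mat_vec M x' i = (\<Sum>j\<le>k. M i j * x j)" for i
  proof -
    have "mat_vec M x' i = (\<Sum>j\<le>k. M i j * x' j)"
      unfolding mat_vec_def by (rule infsum_fin_supp) (auto simp: x'_def)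
    also have "\<dots> = (\<Sum>j\<le>k. M i j * x j)" by (intro sum.cong) (auto simp: x'_def)
    finally show ?thesis .
  qed
  have "(\<Sum>\<^sub>\<infinity>i. mat_vec M x' i * x' i) = (\<Sum>i\<le>k. mat_vec M x' i * x' i)"
    by (rule infsum_fin_supp) (auto simp: x'_def)
  also have "\<dots> = (\<Sum>i\<le>k. x i * (\<Sum>j\<le>k. M i j * x j))"
    by (intro sum.cong) (auto simp: x'_def mv)
  finally have a: "(\<Sum>\<^sub>\<infinity>i. mat_vec M x' i * x' i) = (\<Sum>i\<le>k. x i * (\<Sum>j\<le>k. M i j * x j))" .
  have "ell2_normsq x' = (\<Sum>i\<le>k. (x' i)\<^sup>2)"
    unfolding ell2_normsq_def by (rule infsum_fin_supp) (auto simp: x'_def)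
  also have "\<dots> = (\<Sum>i\<le>k. (x i)\<^sup>2)" by (intro sum.cong) (auto simp: x'_def)
  finally show ?thesis using h a by simp
qed

lemma section_ell_tr:
  assumes ell: "elliptic M c"
  shows "(\<Sum>i\<le>k. x i * (\<Sum>j\<le>k. M j i * x j)) \<ge> c * (\<Sum>i\<le>k. (x i)\<^sup>2)"
proof -
  have "(\<Sum>i\<le>k. x i * (\<Sum>j\<le>k. M j i * x j)) = (\<Sum>j\<le>k. x j * (\<Sum>i\<le>k. M j i * x i))"
  proof -
    have "(\<Sum>i\<le>k. x i * (\<Sum>j\<le>k. M j i * x j)) = (\<Sum>i\<le>k. \<Sum>j\<le>k. x i * M j i * x j)"
      by (simp add: sum_distrib_left mult.assoc)
    also have "\<dots> = (\<Sum>j\<le>k. \<Sum>i\<le>k. x i * M j i * x j)" by (rule sum.swap)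
    also have "\<dots> = (\<Sum>j\<le>k. x j * (\<Sum>i\<le>k. M j i * x i))"
      by (simp add: sum_distrib_left mult.commute mult.left_commute)
    finally show ?thesis .
  qed
  then show ?thesis using section_ell[OF ell, where k=k and x=x] by simp
qed

lemma pivots_ge:
  assumes ell: "elliptic M c" and c: "c > 0"
  shows "doolF M k k \<ge> c"
proof (induction k rule: less_induct)
  case (less k)
  have "\<forall>m<k. doolF M m m \<ge> c" using less by blast
  then show ?case by (rule pivot_ge[OF _ c]) (rule section_ell[OF ell])
qed

lemma swapA:
  fixes X :: "nat \<Rightarrow> nat \<Rightarrow> real" and Y Z :: "nat \<Rightarrow> real"
  shows "(\<Sum>l\<in>A. (\<Sum>m\<in>B. X l m * Y m) * Z l) = (\<Sum>m\<in>B. Y m * (\<Sum>l\<in>A. Z l * X l m))"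
proof -
  have "(\<Sum>l\<in>A. (\<Sum>m\<in>B. X l m * Y m) * Z l) = (\<Sum>l\<in>A. \<Sum>m\<in>B. X l m * Y m * Z l)"
    by (simp add: sum_distrib_right)
  also have "\<dots> = (\<Sum>m\<in>B. \<Sum>l\<in>A. X l m * Y m * Z l)" by (rule sum.swap)
  also have "\<dots> = (\<Sum>m\<in>B. Y m * (\<Sum>l\<in>A. Z l * X l m))"
    by (simp add: sum_distrib_left mult_ac)
  finally show ?thesis .
qed

lemma swapB:
  fixes Y :: "nat \<Rightarrow> nat \<Rightarrow> real" and X Z :: "nat \<Rightarrow> real"
  shows "(\<Sum>m\<in>A. (\<Sum>p\<in>B. X p * Y p m) * Z m) = (\<Sum>p\<in>B. X p * (\<Sum>m\<in>A. Y p m * Z m))"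
proof -
  have "(\<Sum>m\<in>A. (\<Sum>p\<in>B. X p * Y p m) * Z m) = (\<Sum>m\<in>A. \<Sum>p\<in>B. X p * Y p m * Z m)"
    by (simp add: sum_distrib_right)
  also have "\<dots> = (\<Sum>p\<in>B. \<Sum>m\<in>A. X p * Y p m * Z m)" by (rule sum.swap)
  also have "\<dots> = (\<Sum>p\<in>B. X p * (\<Sum>m\<in>A. Y p m * Z m))"
    by (simp add: sum_distrib_left mult_ac)
  finally show ?thesis .
qed

lemma swapC:
  fixes X :: "nat \<Rightarrow> nat \<Rightarrow> real" and Y Z :: "nat \<Rightarrow> real"
  shows "(\<Sum>m\<in>A. Z m * (\<Sum>p\<in>B. X m p * Y p)) = (\<Sum>p\<in>B. (\<Sum>m\<in>A. Z m * X m p) * Y p)"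
proof -
  have "(\<Sum>m\<in>A. Z m * (\<Sum>p\<in>B. X m p * Y p)) = (\<Sum>m\<in>A. \<Sum>p\<in>B. Z m * X m p * Y p)"
    by (simp add: sum_distrib_left mult_ac)
  also have "\<dots> = (\<Sum>p\<in>B. \<Sum>m\<in>A. Z m * X m p * Y p)" by (rule sum.swap)
  also have "\<dots> = (\<Sum>p\<in>B. (\<Sum>m\<in>A. Z m * X m p) * Y p)"
    by (simp add: sum_distrib_right)
  finally show ?thesis .
qed

lemma id_lower: "lower_tri id_mat" unfolding lower_tri_def id_mat_def by auto

theorem theorem3p11:
  fixes d :: "nat \<Rightarrow> nat \<Rightarrow> real" and \<gamma> C_ell :: real and M :: imat
  assumes "is_metric_nat d"
    and "metric_summable d"
    and "\<gamma> > 0"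
    and "jaffard d \<gamma> M"
    and "C_ell > 0"
    and "elliptic M C_ell"
  shows "\<exists>L U Linv Uinv.
           lower_tri L \<and> upper_tri U \<and> M = mat_mult L U \<and>
           lower_tri Linv \<and> mat_mult L Linv = id_mat \<and> mat_mult Linv L = id_mat \<and>
           upper_tri Uinv \<and> mat_mult U Uinv = id_mat \<and> mat_mult Uinv U = id_mat \<and>
           bounded_l2 (abs_mat L) \<and> bounded_l2 (abs_mat U) \<and>
           bounded_l2 (abs_mat Linv) \<and> bounded_l2 (abs_mat Uinv)"
proof -
  define c where "c = C_ell"
  have c: "c > 0" using assms(5) by (simp add: c_def)
  have ell: "elliptic M c" using assms(6) by (simp add: c_def)
  have dnn: "\<And>i j. d i j \<ge> 0" and d0: "\<And>i. d i i = 0" and dsym: "\<And>i j. d i j = d j i"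
    and dtri: "\<And>i j l. d i l \<le> d i j + d j l" using assms(1) unfolding is_metric_nat_def by auto
  have g: "\<gamma> > 0" using assms(3) .
  obtain C where Cpos: "C > 0" and Cb: "\<And>i j. \<bar>M i j\<bar> \<le> C * exp (- (\<gamma>/2) * d i j)"
  proof -
    have "0 < \<gamma>/2 \<and> \<gamma>/2 < \<gamma>" using g by simp
    then obtain C where "C > 0" "\<forall>i j. \<bar>M i j\<bar> \<le> C * exp (- (\<gamma>/2) * d i j)"
      using assms(4) unfolding jaffard_def by blast
    then show ?thesis using that by blast
  qed
  define e4 where "e4 i j = exp (- (\<gamma>/4) * d i j)" for i j
  have g4: "0 < \<gamma>/4" using g by simp
  have ms4: "(\<forall>i. (\<lambda>j. exp (- (\<gamma>/4) * d i j)) summable_on UNIV) \<and>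
            bdd_above (range (\<lambda>i. \<Sum>\<^sub>\<infinity>j. exp (- (\<gamma>/4) * d i j)))"
    by (rule mp[OF spec[OF assms(2)[unfolded metric_summable_def], of "\<gamma>/4"] g4])
  have e4s: "\<And>i. e4 i summable_on UNIV" using ms4 by (simp add: e4_def[abs_def])
  obtain S4 where S4: "\<And>i. infsum (e4 i) UNIV \<le> S4"
    using ms4 by (auto simp: bdd_above_def e4_def[abs_def])
  have e4nn: "e4 i j \<ge> 0" for i j by (simp add: e4_def)
  have e4sym: "e4 i j = e4 j i" for i j by (simp add: e4_def dsym)
  have e4fin: "(\<Sum>j\<in>F. e4 i j) \<le> S4" if "finite F" for i F
  proof -
    have "(\<Sum>j\<in>F. e4 i j) \<le> infsum (e4 i) UNIV"
      by (rule finite_sum_le_infsum[OF e4s that]) (auto simp: e4nn)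
    then show ?thesis using S4[of i] by linarith
  qed
  have e4finc: "(\<Sum>j\<in>F. e4 j i) \<le> S4" if "finite F" for i F
    using e4fin[OF that, of i] by (simp add: e4sym)
  have S4ge: "S4 \<ge> 1" using e4fin[of "{0}" 0] by (simp add: e4_def d0)
  define \<rho> where "\<rho> = \<gamma>/8"
  define \<epsilon> where "\<epsilon> = min (\<gamma>/8) (c * \<rho> / (2 * C * S4))"
  have rho: "\<rho> > 0" using g by (simp add: \<rho>_def)
  have den: "2 * C * S4 > 0" using Cpos S4ge by simp
  have epos: "\<epsilon> > 0" using g c rho den by (simp add: \<epsilon>_def)
  have e8: "\<epsilon> \<le> \<gamma>/8" by (simp add: \<epsilon>_def)
  have e4': "\<epsilon> \<le> \<gamma>/4" using e8 g by simp
  have eC: "\<epsilon> * (2 * C * S4) \<le> c * \<rho>"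
  proof -
    have "\<epsilon> \<le> c * \<rho> / (2 * C * S4)" by (simp add: \<epsilon>_def)
    then show ?thesis using den by (simp add: pos_le_divide_eq)
  qed
  define G where "G i j = (C * \<epsilon> / \<rho>) * e4 i j" for i j
  have Gsym: "G i j = G j i" for i j by (simp add: G_def e4sym)
  have Gb: "\<bar>M i j\<bar> * (exp (\<epsilon> * d i j) - 1) \<le> G i j" for i j
  proof -
    define D where "D = d i j"
    have D: "D \<ge> 0" using dnn by (simp add: D_def)
    have a: "exp (\<epsilon> * D) - 1 \<le> \<epsilon> * D * exp (\<epsilon> * D)" by (rule expm1_le) (use epos D in simp)
    have b: "D \<le> exp (\<rho> * D) / \<rho>" by (rule le_exp_div[OF rho])
    have nn: "exp (\<epsilon> * D) - 1 \<ge> 0" using epos D by simp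
    have "\<bar>M i j\<bar> * (exp (\<epsilon> * D) - 1) \<le> (C * exp (- (\<gamma>/2) * D)) * (\<epsilon> * D * exp (\<epsilon> * D))"
      by (rule mult_mono[OF Cb[of i j, folded D_def] a]) (use nn Cpos in auto)
    also have "\<dots> \<le> (C * exp (- (\<gamma>/2) * D)) * (\<epsilon> * (exp (\<rho> * D) / \<rho>) * exp (\<epsilon> * D))"
      by (intro mult_left_mono mult_right_mono) (use b epos Cpos in auto)
    also have "\<dots> = (C * \<epsilon> / \<rho>) * exp (- (\<gamma>/2) * D + \<rho> * D + \<epsilon> * D)"
      by (simp only: exp_add mult_ac divide_inverse)
    also have "\<dots> \<le> (C * \<epsilon> / \<rho>) * exp (- (\<gamma>/4) * D)"
    proof -
      have "\<rho> * D + \<epsilon> * D \<le> (\<gamma>/8) * D + (\<gamma>/8) * D"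
        by (intro add_mono mult_right_mono) (use D e8 in \<open>auto simp: \<rho>_def\<close>)
      then have "- (\<gamma>/2) * D + \<rho> * D + \<epsilon> * D \<le> - (\<gamma>/4) * D" by linarith
      then show ?thesis using Cpos epos rho by (intro mult_left_mono) auto
    qed
    finally show ?thesis by (simp add: G_def e4_def D_def)
  qed
  have Gsum: "(\<Sum>j\<in>F. G i j) \<le> c/2" if "finite F" for i F
  proof -
    have "(\<Sum>j\<in>F. G i j) = (C * \<epsilon> / \<rho>) * (\<Sum>j\<in>F. e4 i j)" by (simp add: G_def sum_distrib_left)
    also have "\<dots> \<le> (C * \<epsilon> / \<rho>) * S4" by (rule mult_left_mono[OF e4fin[OF that]]) (use Cpos epos rho in simp)
    also have "\<dots> \<le> c/2" using eC rho by (simp add: field_simps)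
    finally show ?thesis .
  qed
  have Gsumc: "(\<Sum>i\<in>F. G i j) \<le> c/2" if "finite F" for j F
    using Gsum[OF that, of j] by (simp add: Gsym)
  have Mrow: "(\<Sum>j\<in>F. \<bar>M k j\<bar>) \<le> C * S4" if "finite F" for k F
  proof -
    have "(\<Sum>j\<in>F. \<bar>M k j\<bar>) \<le> (\<Sum>j\<in>F. C * e4 k j)"
    proof (rule sum_mono)
      fix j
      have "exp (- (\<gamma>/2) * d k j) \<le> e4 k j" using dnn[of k j] g unfolding e4_def
        by (simp add: mult_right_mono)
      then show "\<bar>M k j\<bar> \<le> C * e4 k j" using Cb[of k j] Cpos by (meson mult_left_mono less_imp_le order.trans)
    qed
    also have "\<dots> \<le> C * S4" using e4fin[OF that, of k] Cpos by (simp add: sum_distrib_left[symmetric] mult_left_mono)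
    finally show ?thesis .
  qed
  have piv: "doolF M k k \<ge> c" for k using pivots_ge[OF ell c] .
  have pivnz: "\<forall>m<k. doolF M m m \<noteq> 0" for k using piv c by (metis less_le_trans less_irrefl)
  have pivnz1: "doolF M k k \<noteq> 0" for k using piv[of k] c by linarith
  define L where "L = Lm M"
  define U where "U = Um M"
  define Linv where "Linv = rinvL L"
  define Uinv where "Uinv = (\<lambda>i j. xv M j i / doolF M j j)"
  have Llow: "lower_tri L" by (simp add: L_def Lm_lower)
  have Uup: "upper_tri U" by (simp add: U_def Um_upper)
  have Lilow: "lower_tri Linv" by (simp add: Linv_def rinvL_lower)
  have MLU: "M = mat_mult L U"
  proof (intro ext)
    fix i j
    show "M i j = mat_mult L U i j"
      using LU_entry[of i j M] pivnz1[of j] by (simp add: mm_lower[OF Lm_lower] L_def U_def)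
  qed
  have LLi: "mat_mult L Linv = id_mat"
    unfolding Linv_def by (rule rinvL_right[OF Llow]) (simp add: L_def Lm_def)
  have LiL: "mat_mult Linv L = id_mat"
    unfolding Linv_def by (rule two_sided_lower[OF Llow rinvL_lower LLi[unfolded Linv_def]])
  have Uiup: "upper_tri Uinv"
    unfolding upper_tri_def Uinv_def by (auto simp: xv.simps)
  have Ueq: "(\<Sum>l\<le>k. M i l * Uinv l k) = (if i = k then 1 else 0)" if "i \<le> k" for i k
  proof -
    have "(\<Sum>l\<le>k. M i l * Uinv l k) = (\<Sum>l\<le>k. M i l * xv M k l) / doolF M k k"
      by (simp add: Uinv_def sum_divide_distrib)
    also have "\<dots> = (if i = k then 1 else 0)"
      using A_xv[OF pivnz that] pivnz1[of k] by simp
    finally show ?thesis .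
  qed
  have UUi: "mat_mult U Uinv = id_mat"
  proof (intro ext)
    fix i j
    have "mat_mult U Uinv i j = (\<Sum>m\<le>j. U i m * xv M j m) / doolF M j j"
      unfolding mm_upper[OF Uiup] by (simp add: Uinv_def sum_divide_distrib)
    also have "\<dots> = id_mat i j"
    proof (cases "i \<le> j")
      case True
      then show ?thesis using Um_xv[OF pivnz True] pivnz1[of j] by (simp add: U_def id_mat_def)
    next
      case False
      have "(\<Sum>m\<le>j. U i m * xv M j m) = 0" using False Uup unfolding upper_tri_def by (intro sum.neutral) auto
      then show ?thesis using False by (simp add: id_mat_def)
    qed
    finally show "mat_mult U Uinv i j = id_mat i j" .
  qed
  have UiU: "mat_mult Uinv U = id_mat" by (rule two_sided_upper[OF Uup Uiup UUi])
  have Uid: "\<bar>Uinv i j\<bar> \<le> (2/c) * exp (- \<epsilon> * d i j)" for i j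
  proof (cases "i \<le> j")
    case True
    show ?thesis
      using decay[where A=M and y="\<lambda>l. Uinv l j" and ?i0.0=j and k=j and G=G and d=d and i=i and c=c and \<epsilon>=\<epsilon>,
        OF c less_imp_le[OF epos] order_refl section_ell[OF ell] Ueq dtri dsym d0 dnn Gb Gsum[OF finite_atMost] Gsumc[OF finite_atMost] True]
      by simp
  next
    case False
    then have "Uinv i j = 0" using Uiup unfolding upper_tri_def by auto
    then show ?thesis using c by simp
  qed
  have Fub: "doolF M k k \<le> (C * S4)\<^sup>2 / c" for k
  proof -
    define y where "y l = Uinv l k" for l
    define t where "t = y k"
    have t: "t = 1 / doolF M k k" by (simp add: t_def y_def Uinv_def xv.simps[of M k k])
    have tpos: "t > 0" using t piv[of k] c by simp
    have q: "(\<Sum>i\<le>k. y i * (\<Sum>l\<le>k. M i l * y l)) = t"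
    proof -
      have "(\<Sum>i\<le>k. y i * (\<Sum>l\<le>k. M i l * y l)) = (\<Sum>i\<le>k. y i * (if i = k then 1 else 0))"
        using Ueq by (intro sum.cong) (auto simp: y_def)
      also have "\<dots> = (\<Sum>i\<le>k. if i = k then y i else 0)" by (intro sum.cong) auto
      also have "\<dots> = t" by (simp add: t_def)
      finally show ?thesis .
    qed
    have Ny: "(\<Sum>i\<le>k. (y i)\<^sup>2) \<le> t / c"
      using section_ell[OF ell, where k=k and x=y] q c by (simp add: pos_le_divide_eq mult.commute)
    define Rm where "Rm = C * S4"
    have Rm: "Rm > 0" using Cpos S4ge by (simp add: Rm_def)
    define B where "B = (1 / Rm + Rm * (t / c)) / 2"
    have yb: "\<bar>y l\<bar> \<le> B" if "l \<le> k" for l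
    proof -
      have "(y l)\<^sup>2 \<le> (\<Sum>i\<le>k. (y i)\<^sup>2)"
        using sum_mono2[of "{..k}" "{l}" "\<lambda>i. (y i)\<^sup>2"] that by simp
      then have yl: "(y l)\<^sup>2 \<le> t / c" using Ny by linarith
      have "2 * \<bar>y l\<bar> \<le> 1 / Rm + Rm * (y l)\<^sup>2"
      proof -
        have "0 \<le> (1 - Rm * \<bar>y l\<bar>)\<^sup>2 / Rm" using Rm by simp
        also have "(1 - Rm * \<bar>y l\<bar>)\<^sup>2 / Rm = 1 / Rm + Rm * (y l)\<^sup>2 - 2 * \<bar>y l\<bar>"
          using Rm by (simp add: power2_eq_square field_simps)
        finally show ?thesis by simp
      qed
      moreover have "Rm * (y l)\<^sup>2 \<le> Rm * (t / c)" using mult_left_mono[OF yl, of Rm] Rm by simp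
      ultimately have "2 * \<bar>y l\<bar> \<le> 1 / Rm + Rm * (t / c)" by linarith
      then show ?thesis unfolding B_def by simp
    qed
    have "1 = (\<Sum>l\<le>k. M k l * y l)" using Ueq[of k k] by (simp add: y_def)
    also have "\<dots> \<le> (\<Sum>l\<le>k. \<bar>M k l\<bar> * B)"
    proof (rule sum_mono)
      fix l assume "l \<in> {..k}"
      then have "\<bar>y l\<bar> \<le> B" using yb by simp
      then have "\<bar>M k l\<bar> * \<bar>y l\<bar> \<le> \<bar>M k l\<bar> * B" by (simp add: mult_left_mono)
      moreover have "M k l * y l \<le> \<bar>M k l\<bar> * \<bar>y l\<bar>" by (metis abs_ge_self abs_mult)
      ultimately show "M k l * y l \<le> \<bar>M k l\<bar> * B" by linarith
    qed
    also have "\<dots> = (\<Sum>l\<le>k. \<bar>M k l\<bar>) * B" by (simp add: sum_distrib_right)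
    also have "\<dots> \<le> Rm * B"
    proof (rule mult_right_mono)
      show "(\<Sum>l\<le>k. \<bar>M k l\<bar>) \<le> Rm" using Mrow[of "{..k}" k] by (simp add: Rm_def)
      show "0 \<le> B" unfolding B_def using Rm tpos c by simp
    qed
    also have "\<dots> = (1 + Rm\<^sup>2 * t / c) / 2" unfolding B_def using Rm by (simp add: field_simps power2_eq_square)
    finally have "1 \<le> Rm\<^sup>2 * t / c" by simp
    then have "c \<le> Rm\<^sup>2 * t" using c by (simp add: pos_le_divide_eq)
    then have "c / t \<le> Rm\<^sup>2" using tpos by (simp add: pos_divide_le_eq)
    then show ?thesis using t c piv[of k] by (simp add: Rm_def field_simps)
  qed
  define Fb where "Fb = (C * S4)\<^sup>2 / c"
  have Fbnn: "Fb \<ge> 0" using c by (simp add: Fb_def)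
  have Lid: "\<bar>Linv i j\<bar> \<le> Fb * (2/c) * exp (- \<epsilon> * d i j)" for i j
  proof (cases "j \<le> i")
    case True
    define z where "z l = Linv i l / doolF M i i" for l
    have zeq: "(\<Sum>l\<le>i. M l a * z l) = (if a = i then 1 else 0)" if "a \<le> i" for a
    proof -
      have "(\<Sum>l\<le>i. M l a * Linv i l) = (\<Sum>l\<le>i. (\<Sum>m\<le>i. L l m * U m a) * Linv i l)"
      proof (rule sum.cong[OF refl])
        fix l assume l: "l \<in> {..i}"
        have "M l a = (\<Sum>m\<le>l. L l m * U m a)"
          using LU_entry[of l a M] pivnz1[of a] by (simp add: L_def U_def)
        also have "\<dots> = (\<Sum>m\<le>i. L l m * U m a)"
          by (rule sum.mono_neutral_left) (use l Llow in \<open>auto simp: lower_tri_def\<close>)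
        finally show "M l a * Linv i l = (\<Sum>m\<le>i. L l m * U m a) * Linv i l" by simp
      qed
      also have "\<dots> = (\<Sum>m\<le>i. U m a * (\<Sum>l\<le>i. Linv i l * L l m))"
        by (rule swapA)
      also have "\<dots> = (\<Sum>m\<le>i. U m a * id_mat i m)"
        using LiL by (simp add: mm_lower[OF Lilow, symmetric])
      also have "\<dots> = (\<Sum>m\<le>i. if m = i then U m a else 0)" by (intro sum.cong) (auto simp: id_mat_def)
      also have "\<dots> = U i a" by simp
      also have "\<dots> = (if a = i then doolF M i i else 0)"
        using that by (auto simp: U_def Um_def)
      finally have "(\<Sum>l\<le>i. M l a * Linv i l) = (if a = i then doolF M i i else 0)" .
      then show ?thesis using pivnz1[of i] by (simp add: z_def sum_divide_distrib[symmetric])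
    qed
    have zb: "\<bar>z j\<bar> \<le> (2/c) * exp (- \<epsilon> * d j i)"
    proof -
      have GbT: "\<bar>M b a\<bar> * (exp (\<epsilon> * d a b) - 1) \<le> G a b" for a b
        using Gb[of b a] Gsym[of a b] dsym[of a b] by simp
      show ?thesis
        using decay[where A="\<lambda>a b. M b a" and y=z and ?i0.0=i and k=i and G=G and d=d and i=j and c=c and \<epsilon>=\<epsilon>,
          OF c less_imp_le[OF epos] order_refl section_ell_tr[OF ell] zeq dtri dsym d0 dnn GbT
             Gsum[OF finite_atMost] Gsumc[OF finite_atMost] True]
        by simp
    qed
    have "\<bar>Linv i j\<bar> = doolF M i i * \<bar>z j\<bar>" using piv[of i] c pivnz1[of i] by (simp add: z_def abs_divide)
    also have "\<dots> \<le> Fb * ((2/c) * exp (- \<epsilon> * d j i))"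
      by (rule mult_mono) (use Fub[of i] zb piv[of i] c in \<open>auto simp: Fb_def\<close>)
    finally show ?thesis by (simp add: dsym[of j i] mult.assoc)
  next
    case False
    then have "Linv i j = 0" using Lilow unfolding lower_tri_def by auto
    then show ?thesis using c Fbnn by simp
  qed
  have Lrep: "L i j = (\<Sum>m\<le>j. M i m * Uinv m j)" for i j
  proof -
    have "(\<Sum>m\<le>j. M i m * Uinv m j) = (\<Sum>m\<le>j. (\<Sum>p\<le>i. L i p * U p m) * Uinv m j)"
      using MLU by (simp add: mm_lower[OF Llow])
    also have "\<dots> = (\<Sum>p\<le>i. L i p * (\<Sum>m\<le>j. U p m * Uinv m j))"
      by (rule swapB)
    also have "\<dots> = (\<Sum>p\<le>i. L i p * id_mat p j)"
      using UUi by (simp add: mm_upper[OF Uiup, symmetric])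
    also have "\<dots> = mat_mult L id_mat i j" by (simp add: mm_lower[OF Llow])
    also have "\<dots> = L i j" by (simp add: mm_id_right)
    finally show ?thesis by simp
  qed
  have Urep: "U i j = (\<Sum>m\<le>i. Linv i m * M m j)" for i j
  proof -
    have "(\<Sum>m\<le>i. Linv i m * M m j) = (\<Sum>m\<le>i. Linv i m * (\<Sum>p\<le>i. L m p * U p j))"
    proof (rule sum.cong[OF refl])
      fix m assume m: "m \<in> {..i}"
      have "M m j = (\<Sum>p\<le>m. L m p * U p j)"
        using LU_entry[of m j M] pivnz1[of j] by (simp add: L_def U_def)
      also have "\<dots> = (\<Sum>p\<le>i. L m p * U p j)"
        by (rule sum.mono_neutral_left) (use m Llow in \<open>auto simp: lower_tri_def\<close>)
      finally show "Linv i m * M m j = Linv i m * (\<Sum>p\<le>i. L m p * U p j)" by simp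
    qed
    also have "\<dots> = (\<Sum>p\<le>i. (\<Sum>m\<le>i. Linv i m * L m p) * U p j)"
      by (rule swapC)
    also have "\<dots> = (\<Sum>p\<le>i. id_mat i p * U p j)"
      using LiL by (simp add: mm_lower[OF Lilow, symmetric])
    also have "\<dots> = mat_mult id_mat U i j" by (simp add: mm_lower[OF id_lower])
    also have "\<dots> = U i j" by (simp add: mm_id_left)
    finally show ?thesis by simp
  qed
  have Ldec: "\<bar>L i j\<bar> \<le> (C * (2/c) * S4) * exp (- \<epsilon> * d i j)" for i j
  proof -
    have "\<bar>L i j\<bar> \<le> C * (2/c) * exp (- \<epsilon> * d i j) * (\<Sum>m\<le>j. exp (- (\<gamma>/4) * d i m))"
      unfolding Lrep
      by (rule conv_bound2[where \<gamma>=\<gamma>]) (use dtri dnn epos e4' Cpos c Cb Uid in auto)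
    also have "\<dots> \<le> C * (2/c) * exp (- \<epsilon> * d i j) * S4"
      by (rule mult_left_mono) (use e4fin[of "{..j}" i] Cpos c in \<open>auto simp: e4_def\<close>)
    finally show ?thesis by (simp add: mult_ac)
  qed
  have Udec: "\<bar>U i j\<bar> \<le> (Fb * (2/c) * C * S4) * exp (- \<epsilon> * d i j)" for i j
  proof -
    have "\<bar>U i j\<bar> \<le> Fb * (2/c) * C * exp (- \<epsilon> * d i j) * (\<Sum>m\<le>i. exp (- (\<gamma>/4) * d m j))"
      unfolding Urep
      by (rule conv_bound1[where \<gamma>=\<gamma>]) (use dtri dnn epos e4' Cpos c Cb Lid Fbnn in auto)
    also have "\<dots> \<le> Fb * (2/c) * C * exp (- \<epsilon> * d i j) * S4"
      by (rule mult_left_mono) (use e4finc[of "{..i}" j] Cpos c Fbnn in \<open>auto simp: e4_def\<close>)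
    finally show ?thesis by (simp add: mult_ac)
  qed
  have bL: "bounded_l2 (abs_mat L)"
    by (rule schur[OF dsym dnn assms(2) epos, where K="C * (2/c) * S4"])
      (use Ldec Cpos c S4ge in \<open>auto simp: abs_mat_def\<close>)
  have bU: "bounded_l2 (abs_mat U)"
    by (rule schur[OF dsym dnn assms(2) epos, where K="Fb * (2/c) * C * S4"])
      (use Udec Cpos c S4ge Fbnn in \<open>auto simp: abs_mat_def\<close>)
  have bLi: "bounded_l2 (abs_mat Linv)"
    by (rule schur[OF dsym dnn assms(2) epos, where K="Fb * (2/c)"])
      (use Lid c Fbnn in \<open>auto simp: abs_mat_def\<close>)
  have bUi: "bounded_l2 (abs_mat Uinv)"
    by (rule schur[OF dsym dnn assms(2) epos, where K="2/c"])
      (use Uid c in \<open>auto simp: abs_mat_def\<close>)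
  show ?thesis
    using Llow Uup MLU Lilow LLi LiL Uiup UUi UiU bL bU bLi bUi by blast
qed


end
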